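(* $E_{FTP}$ is sound and ground-complete for bisimilarity on $T(\Sigma_{FTP})$: for all $t,t'\in T(\Sigma_{FTP})$, $E_{FTP}\vdash t=t'$ if and only if $t\sim t'$.
   Context: Fix a finite nonempty set $\mathcal A$ of actions, a finite set $\mathcal P$ of predicates, a subset $\mathcal P^I\subseteq\mathcal P$ of implicit predicates, and for each $P\in\mathcal P^I$ a set $\mathcal A_P\subseteq\mathcal A$. $\Sigma_{FTP}$ consists of a constant $\delta$, constants $\kappa_P$ ($P\in\mathcal P$), unary prefixes $a.\_$ ($a\in\mathcal A$), and binary $+$; closed terms $T(\Sigma_{FTP})$. Semantics: the least transition relation and predicate relation closed under: $a.x\xrightarrow{a}x$; $x\xrightarrow{a}x'\Rightarrow x+y\xrightarrow{a}x'$; $y\xrightarrow{a}y'\Rightarrow x+y\xrightarrow{a}y'$; $P\kappa_P$; $Px\Rightarrow P(x+y)$; $Py\Rightarrow P(x+y)$; $Px\Rightarrow P(a.x)$ for $P\in\mathcal P^I$, $a\in\mathcal A_P$. A symmetric relation $R$ on closed terms is a bisimulation if whenever $(s,t)\in R$: $s\xrightarrow{a}s'$ implies $t\xrightarrow{a}t'$ with $(s',t')\in R$ for some $t'$, and $Ps$ implies $Pt$; $\sim$ is the union of all bisimulations. $E_{FTP}$ consists of $x+y=y+x$, $(x+y)+z=x+(y+z)$, $x+x=x$, $x+\delta=x$, and $a.(x+\kappa_P)=a.(x+\kappa_P)+\kappa_P$ for $P\in\mathcal P^I$, $a\in\mathcal A_P$; $\vdash$ is derivability in equational logic. *)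

theory Defs
  imports Main
begin

text \<open>Terms over the signature Sigma_FTP, with variables (natural numbers) so that
  equational logic can be formulated; closed terms are those without variables.
  Actions are a finite type 'a (nonempty as every type), predicates a finite type 'p.\<close>

datatype ('a, 'p) tm =
    Var nat
  | Delta
  | Kappa 'p
  | Pre 'a "('a, 'p) tm"
  | Plus "('a, 'p) tm" "('a, 'p) tm"

fun closed :: "('a, 'p) tm \<Rightarrow> bool" where
  "closed (Var x) = False"
| "closed Delta = True"
| "closed (Kappa P) = True"
| "closed (Pre a t) = closed t"
| "closed (Plus t u) = (closed t \<and> closed u)"

fun subst :: "(nat \<Rightarrow> ('a, 'p) tm) \<Rightarrow> ('a, 'p) tm \<Rightarrow> ('a, 'p) tm" where
  "subst \<sigma> (Var x) = \<sigma> x"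
| "subst \<sigma> Delta = Delta"
| "subst \<sigma> (Kappa P) = Kappa P"
| "subst \<sigma> (Pre a t) = Pre a (subst \<sigma> t)"
| "subst \<sigma> (Plus t u) = Plus (subst \<sigma> t) (subst \<sigma> u)"

text \<open>Operational semantics: least transition and predicate relations.
  PI is the set of implicit predicates, AP P the set A_P.\<close>

inductive step :: "('a, 'p) tm \<Rightarrow> 'a \<Rightarrow> ('a, 'p) tm \<Rightarrow> bool" where
  step_pre: "step (Pre a x) a x"
| step_plus1: "step x a x' \<Longrightarrow> step (Plus x y) a x'"
| step_plus2: "step y a y' \<Longrightarrow> step (Plus x y) a y'"

inductive holds :: "'p set \<Rightarrow> ('p \<Rightarrow> 'a set) \<Rightarrow> 'p \<Rightarrow> ('a, 'p) tm \<Rightarrow> bool"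
  for PI :: "'p set" and AP :: "'p \<Rightarrow> 'a set" where
  holds_kappa: "holds PI AP P (Kappa P)"
| holds_plus1: "holds PI AP P x \<Longrightarrow> holds PI AP P (Plus x y)"
| holds_plus2: "holds PI AP P y \<Longrightarrow> holds PI AP P (Plus x y)"
| holds_pre: "P \<in> PI \<Longrightarrow> a \<in> AP P \<Longrightarrow> holds PI AP P x \<Longrightarrow> holds PI AP P (Pre a x)"

definition bisimulation ::
  "'p set \<Rightarrow> ('p \<Rightarrow> 'a set) \<Rightarrow> (('a, 'p) tm \<times> ('a, 'p) tm) set \<Rightarrow> bool" where
  "bisimulation PI AP R \<longleftrightarrow>
     (\<forall>(s, t) \<in> R. closed s \<and> closed t) \<and> sym R \<and>
     (\<forall>(s, t) \<in> R.
        (\<forall>a s'. step s a s' \<longrightarrow> (\<exists>t'. step t a t' \<and> (s', t') \<in> R)) \<and>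
        (\<forall>P. holds PI AP P s \<longrightarrow> holds PI AP P t))"

definition bisimilar :: "'p set \<Rightarrow> ('p \<Rightarrow> 'a set) \<Rightarrow> ('a, 'p) tm \<Rightarrow> ('a, 'p) tm \<Rightarrow> bool" where
  "bisimilar PI AP s t \<longleftrightarrow> (\<exists>R. bisimulation PI AP R \<and> (s, t) \<in> R)"

inductive_set E_FTP :: "'p set \<Rightarrow> ('p \<Rightarrow> 'a set) \<Rightarrow> (('a, 'p) tm \<times> ('a, 'p) tm) set"
  for PI :: "'p set" and AP :: "'p \<Rightarrow> 'a set" where
  ax_comm: "(Plus (Var 0) (Var 1), Plus (Var 1) (Var 0)) \<in> E_FTP PI AP"
| ax_assoc: "(Plus (Plus (Var 0) (Var 1)) (Var 2), Plus (Var 0) (Plus (Var 1) (Var 2))) \<in> E_FTP PI AP"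
| ax_idem: "(Plus (Var 0) (Var 0), Var 0) \<in> E_FTP PI AP"
| ax_delta: "(Plus (Var 0) Delta, Var 0) \<in> E_FTP PI AP"
| ax_impl: "P \<in> PI \<Longrightarrow> a \<in> AP P \<Longrightarrow>
    (Pre a (Plus (Var 0) (Kappa P)), Plus (Pre a (Plus (Var 0) (Kappa P))) (Kappa P)) \<in> E_FTP PI AP"

inductive derivable :: "'p set \<Rightarrow> ('p \<Rightarrow> 'a set) \<Rightarrow> ('a, 'p) tm \<Rightarrow> ('a, 'p) tm \<Rightarrow> bool"
  for PI :: "'p set" and AP :: "'p \<Rightarrow> 'a set" where
  der_ax: "(l, r) \<in> E_FTP PI AP \<Longrightarrow> derivable PI AP (subst \<sigma> l) (subst \<sigma> r)"
| der_refl: "derivable PI AP t t"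
| der_sym: "derivable PI AP t u \<Longrightarrow> derivable PI AP u t"
| der_trans: "derivable PI AP t u \<Longrightarrow> derivable PI AP u v \<Longrightarrow> derivable PI AP t v"
| der_pre: "derivable PI AP t u \<Longrightarrow> derivable PI AP (Pre a t) (Pre a u)"
| der_plus: "derivable PI AP t u \<Longrightarrow> derivable PI AP t' u' \<Longrightarrow>
     derivable PI AP (Plus t t') (Plus u u')"

end

theory Submission
  imports Defs
begin

definition simd :: "'p set \<Rightarrow> ('p \<Rightarrow> 'a set) \<Rightarrow> ('a, 'p) tm \<Rightarrow> ('a, 'p) tm \<Rightarrow> bool" where
  "simd PI AP x y \<longleftrightarrow>
     (\<forall>a x'. step x a x' \<longrightarrow> (\<exists>y'. step y a y' \<and> derivable PI AP x' y')) \<and>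
     (\<forall>P. holds PI AP P x \<longrightarrow> holds PI AP P y)"

lemma step_Plus_iff: "step (Plus x y) a z \<longleftrightarrow> step x a z \<or> step y a z"
  by (auto elim: step.cases intro: step.intros)

lemma step_Pre_iff: "step (Pre b x) a z \<longleftrightarrow> a = b \<and> z = x"
  by (auto elim: step.cases intro: step.intros)

lemma step_Delta: "\<not> step Delta a z" by (auto elim: step.cases)
lemma step_Kappa: "\<not> step (Kappa P) a z" by (auto elim: step.cases)
lemma step_Var: "\<not> step (Var n) a z" by (auto elim: step.cases)

lemma holds_Plus_iff: "holds PI AP P (Plus x y) \<longleftrightarrow> holds PI AP P x \<or> holds PI AP P y"
  by (auto elim: holds.cases intro: holds.intros)

lemma holds_Pre_iff: "holds PI AP P (Pre a x) \<longleftrightarrow> P \<in> PI \<and> a \<in> AP P \<and> holds PI AP P x"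
  by (auto elim: holds.cases intro: holds.intros)

lemma holds_Delta: "\<not> holds PI AP P Delta" by (auto elim: holds.cases)
lemma holds_Var: "\<not> holds PI AP P (Var n)" by (auto elim: holds.cases)
lemma holds_Kappa: "holds PI AP P (Kappa Q) \<longleftrightarrow> P = Q" by (auto elim: holds.cases intro: holds.intros)

lemmas sem_simps = step_Plus_iff step_Pre_iff step_Delta step_Kappa step_Var
  holds_Plus_iff holds_Pre_iff holds_Delta holds_Var holds_Kappa

lemma simd_refl: "simd PI AP x x"
  unfolding simd_def by (auto intro: der_refl)

lemma ax_sound:
  assumes "(l, r) \<in> E_FTP PI AP"
  shows "simd PI AP (subst \<sigma> l) (subst \<sigma> r) \<and> simd PI AP (subst \<sigma> r) (subst \<sigma> l)"
  using assms
proof cases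
  case ax_comm then show ?thesis unfolding simd_def by (auto simp: sem_simps intro: der_refl)
next
  case ax_assoc then show ?thesis unfolding simd_def by (auto simp: sem_simps intro: der_refl)
next
  case ax_idem then show ?thesis unfolding simd_def by (auto simp: sem_simps intro: der_refl)
next
  case ax_delta then show ?thesis unfolding simd_def by (auto simp: sem_simps intro: der_refl)
next
  case (ax_impl P a) then show ?thesis unfolding simd_def by (auto simp: sem_simps intro: der_refl)
qed

lemma simd_pre: "derivable PI AP t u \<Longrightarrow> simd PI AP t u \<Longrightarrow> simd PI AP (Pre a t) (Pre a u)"
  unfolding simd_def step_Pre_iff holds_Pre_iff by blast

lemma simd_plus: "simd PI AP t u \<Longrightarrow> simd PI AP t' u' \<Longrightarrow> simd PI AP (Plus t t') (Plus u u')"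
  unfolding simd_def step_Plus_iff holds_Plus_iff by blast

lemma simd_trans:
  assumes "simd PI AP t u" "simd PI AP u v" shows "simd PI AP t v"
  unfolding simd_def
proof (intro conjI allI impI)
  fix a x' assume "step t a x'"
  then obtain y' where "step u a y'" "derivable PI AP x' y'" using assms(1) unfolding simd_def by blast
  then obtain z' where "step v a z'" "derivable PI AP y' z'" using assms(2) unfolding simd_def by blast
  then show "\<exists>y'. step v a y' \<and> derivable PI AP x' y'"
    using derivable.der_trans[OF \<open>derivable PI AP x' y'\<close>] by blast
next
  fix P assume "holds PI AP P t" then show "holds PI AP P v" using assms unfolding simd_def by blast
qed

lemma derivable_sim:
  "derivable PI AP u v \<Longrightarrow> simd PI AP u v \<and> simd PI AP v u"
proof (induction rule: derivable.induct)
  case (der_ax l r \<sigma>) then show ?case by (rule ax_sound)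
next
  case (der_refl t) then show ?case by (simp add: simd_refl)
next
  case (der_sym t u) then show ?case by simp
next
  case (der_trans t u v)
  then show ?case using simd_trans[of PI AP t u v] simd_trans[of PI AP v u t] by simp
next
  case (der_pre t u a)
  then show ?case using simd_pre[of PI AP t u a] simd_pre[of PI AP u t a] derivable.der_sym[of PI AP t u] by simp
next
  case (der_plus t u t' u')
  then show ?case using simd_plus[of PI AP t u t' u'] simd_plus[of PI AP u t u' t'] by simp
qed

lemma step_closed: "step x a y \<Longrightarrow> closed x \<Longrightarrow> closed y"
  by (induction rule: step.induct) auto

lemma sound_step:
  assumes "derivable PI AP s u" "step s a s'"
  shows "\<exists>u'. step u a u' \<and> derivable PI AP s' u'"
  using derivable_sim[OF assms(1)] assms(2) unfolding simd_def by blast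

lemma sound_holds:
  assumes "derivable PI AP s u" "holds PI AP P s"
  shows "holds PI AP P u"
  using derivable_sim[OF assms(1)] assms(2) unfolding simd_def by blast

lemma soundness:
  assumes "closed t" "closed t'" "derivable PI AP t t'"
  shows "bisimilar PI AP t t'"
proof -
  define R where "R = {(s, u). closed s \<and> closed u \<and> derivable PI AP s u}"
  have memR: "(x, y) \<in> R \<longleftrightarrow> closed x \<and> closed y \<and> derivable PI AP x y" for x y
    unfolding R_def by simp
  have c: "\<forall>(s, u)\<in>R. closed s \<and> closed u" using memR by auto
  have sy: "sym R"
  proof (rule symI)
    fix x y assume "(x, y) \<in> R"
    then show "(y, x) \<in> R" using memR der_sym[of PI AP x y] by simp
  qed
  have st1: "\<exists>t'. step u a t' \<and> (s', t') \<in> R" if H: "(s, u) \<in> R" "step s a s'" for s u a s'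
  proof -
    have h: "closed s" "closed u" "derivable PI AP s u" using H(1) memR by auto
    obtain u' where u': "step u a u'" "derivable PI AP s' u'" using sound_step[OF h(3) H(2)] by blast
    have "closed s'" using step_closed[OF H(2) h(1)] .
    moreover have "closed u'" using step_closed[OF u'(1) h(2)] .
    ultimately have "(s', u') \<in> R" using memR u'(2) by simp
    then show ?thesis using u'(1) by blast
  qed
  have st2: "holds PI AP P u" if "(s, u) \<in> R" "holds PI AP P s" for s u P
    using sound_holds[OF _ that(2)] that(1) memR by simp
  have st: "\<forall>(s, u)\<in>R. (\<forall>a s'. step s a s' \<longrightarrow> (\<exists>t'. step u a t' \<and> (s', t') \<in> R)) \<and>
        (\<forall>P. holds PI AP P s \<longrightarrow> holds PI AP P u)"
    using st1 st2 by blast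
  have "bisimulation PI AP R" unfolding bisimulation_def using c sy st by (simp only:)
  moreover have "(t, t') \<in> R" using memR assms by simp
  ultimately show ?thesis unfolding bisimilar_def by blast
qed

lemmas der_trans_rule[trans] = der_trans

lemma dplusL: "derivable PI AP t u \<Longrightarrow> derivable PI AP (Plus t v) (Plus u v)"
  by (rule der_plus, assumption, rule der_refl)

lemma dplusR: "derivable PI AP t u \<Longrightarrow> derivable PI AP (Plus v t) (Plus v u)"
  by (rule der_plus[OF der_refl])

lemma d_comm: "derivable PI AP (Plus x y) (Plus y x)"
  using der_ax[OF ax_comm, of PI AP "\<lambda>n. if n = 0 then x else y"] by simp

lemma d_assoc: "derivable PI AP (Plus (Plus x y) z) (Plus x (Plus y z))"
  using der_ax[OF ax_assoc, of PI AP "\<lambda>n. if n = 0 then x else if n = 1 then y else z"] by simp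

lemma d_idem: "derivable PI AP (Plus x x) x"
  using der_ax[OF ax_idem, of PI AP "\<lambda>n. x"] by simp

lemma d_delta: "derivable PI AP (Plus x Delta) x"
  using der_ax[OF ax_delta, of PI AP "\<lambda>n. x"] by simp

lemma d_impl: "P \<in> PI \<Longrightarrow> a \<in> AP P \<Longrightarrow>
  derivable PI AP (Pre a (Plus x (Kappa P))) (Plus (Pre a (Plus x (Kappa P))) (Kappa P))"
  using der_ax[OF ax_impl, of P PI a AP "\<lambda>n. x"] by simp

lemma d_absorb_hold: "holds PI AP P t \<Longrightarrow> derivable PI AP t (Plus t (Kappa P))"
proof (induction rule: holds.induct)
  case (holds_kappa P)
  then show ?case by (rule der_sym[OF d_idem])
next
  case (holds_plus1 P x y)
  have "derivable PI AP (Plus x y) (Plus (Plus x (Kappa P)) y)"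
    by (rule dplusL[OF holds_plus1.IH])
  also have "derivable PI AP \<dots> (Plus x (Plus (Kappa P) y))" by (rule d_assoc)
  also have "derivable PI AP \<dots> (Plus x (Plus y (Kappa P)))" by (rule dplusR[OF d_comm])
  also have "derivable PI AP \<dots> (Plus (Plus x y) (Kappa P))" by (rule der_sym[OF d_assoc])
  finally show ?case .
next
  case (holds_plus2 P y x)
  have "derivable PI AP (Plus x y) (Plus x (Plus y (Kappa P)))"
    by (rule dplusR[OF holds_plus2.IH])
  also have "derivable PI AP \<dots> (Plus (Plus x y) (Kappa P))" by (rule der_sym[OF d_assoc])
  finally show ?case .
next
  case (holds_pre P a x)
  have "derivable PI AP (Pre a x) (Pre a (Plus x (Kappa P)))" by (rule der_pre) (rule holds_pre.IH)
  also have "derivable PI AP \<dots> (Plus (Pre a (Plus x (Kappa P))) (Kappa P))" using holds_pre.hyps(1,2) by (rule d_impl)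
  also have "derivable PI AP \<dots> (Plus (Pre a x) (Kappa P))"
    by (rule dplusL[OF der_pre[OF der_sym[OF holds_pre.IH]]])
  finally show ?case .
qed

lemma d_absorb_step: "step t a t' \<Longrightarrow> derivable PI AP t (Plus t (Pre a t'))"
proof (induction rule: step.induct)
  case (step_pre a x)
  then show ?case by (rule der_sym[OF d_idem])
next
  case (step_plus1 x a x' y)
  have "derivable PI AP (Plus x y) (Plus (Plus x (Pre a x')) y)"
    by (rule dplusL[OF step_plus1.IH])
  also have "derivable PI AP \<dots> (Plus x (Plus (Pre a x') y))" by (rule d_assoc)
  also have "derivable PI AP \<dots> (Plus x (Plus y (Pre a x')))" by (rule dplusR[OF d_comm])
  also have "derivable PI AP \<dots> (Plus (Plus x y) (Pre a x'))" by (rule der_sym[OF d_assoc])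
  finally show ?case .
next
  case (step_plus2 y a y' x)
  have "derivable PI AP (Plus x y) (Plus x (Plus y (Pre a y')))"
    by (rule dplusR[OF step_plus2.IH])
  also have "derivable PI AP \<dots> (Plus (Plus x y) (Pre a y'))" by (rule der_sym[OF d_assoc])
  finally show ?case .
qed

lemma absorb:
  assumes "closed s"
    and "\<forall>a s'. step s a s' \<longrightarrow> (\<exists>t'. step t a t' \<and> derivable PI AP s' t')"
    and "\<forall>P. holds PI AP P s \<longrightarrow> holds PI AP P t"
  shows "derivable PI AP (Plus t s) t"
  using assms
proof (induction s)
  case (Var x) then show ?case by simp
next
  case Delta show ?case by (rule d_delta)
next
  case (Kappa P)
  have "holds PI AP P (Kappa P)" by (rule holds.holds_kappa)
  then have "holds PI AP P t" using Kappa.prems(3) by blast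
  then show ?case by (rule der_sym[OF d_absorb_hold])
next
  case (Pre a s')
  have "step (Pre a s') a s'" by (rule step.step_pre)
  then obtain t' where t': "step t a t'" "derivable PI AP s' t'" using Pre.prems(2) by blast
  have "derivable PI AP (Plus t (Pre a s')) (Plus t (Pre a t'))"
    by (rule dplusR[OF der_pre[OF t'(2)]])
  also have "derivable PI AP \<dots> t" by (rule der_sym[OF d_absorb_step[OF t'(1)]])
  finally show ?case .
next
  case (Plus s1 s2)
  have c1: "closed s1" and c2: "closed s2" using Plus.prems(1) by simp_all
  have a1: "\<forall>a s'. step s1 a s' \<longrightarrow> (\<exists>t'. step t a t' \<and> derivable PI AP s' t')"
  proof (intro allI impI)
    fix a s' assume "step s1 a s'"
    then have "step (Plus s1 s2) a s'" by (rule step.step_plus1)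
    then show "\<exists>t'. step t a t' \<and> derivable PI AP s' t'" using Plus.prems(2) by blast
  qed
  have a2: "\<forall>a s'. step s2 a s' \<longrightarrow> (\<exists>t'. step t a t' \<and> derivable PI AP s' t')"
  proof (intro allI impI)
    fix a s' assume "step s2 a s'"
    then have "step (Plus s1 s2) a s'" by (rule step.step_plus2)
    then show "\<exists>t'. step t a t' \<and> derivable PI AP s' t'" using Plus.prems(2) by blast
  qed
  have h1: "\<forall>P. holds PI AP P s1 \<longrightarrow> holds PI AP P t"
  proof (intro allI impI)
    fix P assume "holds PI AP P s1"
    then have "holds PI AP P (Plus s1 s2)" by (rule holds.holds_plus1)
    then show "holds PI AP P t" using Plus.prems(3) by blast
  qed
  have h2: "\<forall>P. holds PI AP P s2 \<longrightarrow> holds PI AP P t"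
  proof (intro allI impI)
    fix P assume "holds PI AP P s2"
    then have "holds PI AP P (Plus s1 s2)" by (rule holds.holds_plus2)
    then show "holds PI AP P t" using Plus.prems(3) by blast
  qed
  have IH1: "derivable PI AP (Plus t s1) t" using Plus.IH(1)[OF c1 a1 h1] .
  have IH2: "derivable PI AP (Plus t s2) t" using Plus.IH(2)[OF c2 a2 h2] .
  have "derivable PI AP (Plus t (Plus s1 s2)) (Plus (Plus t s1) s2)" by (rule der_sym[OF d_assoc])
  also have "derivable PI AP \<dots> (Plus t s2)" by (rule dplusL[OF IH1])
  also have "derivable PI AP \<dots> t" by (rule IH2)
  finally show ?case .
qed

lemma step_size: "step x a y \<Longrightarrow> size y < size x"
  by (induction rule: step.induct) auto

lemma bisim_props:
  assumes "bisimilar PI AP s t"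
  shows "closed s" "closed t" "bisimilar PI AP t s"
    "step s a s' \<Longrightarrow> \<exists>t'. step t a t' \<and> bisimilar PI AP s' t'"
    "holds PI AP P s \<Longrightarrow> holds PI AP P t"
proof -
  obtain R where R: "bisimulation PI AP R" "(s, t) \<in> R" using assms unfolding bisimilar_def by blast
  have Bs: "(\<forall>(s, t) \<in> R. closed s \<and> closed t) \<and> sym R \<and> (\<forall>(s, t) \<in> R.
        (\<forall>a s'. step s a s' \<longrightarrow> (\<exists>t'. step t a t' \<and> (s', t') \<in> R)) \<and>
        (\<forall>P. holds PI AP P s \<longrightarrow> holds PI AP P t))"
    using R(1) unfolding bisimulation_def .
  note B1 = conjunct1[OF Bs]
  note B2 = conjunct1[OF conjunct2[OF Bs]]
  note B3 = conjunct2[OF conjunct2[OF Bs]]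
  have C: "closed s \<and> closed t" using B1 R(2) by fast
  then show "closed s" "closed t" by simp_all
  have "(t, s) \<in> R" using B2 R(2) by (rule symD)
  then show "bisimilar PI AP t s" unfolding bisimilar_def using R(1) by blast
  have D: "(\<forall>a s'. step s a s' \<longrightarrow> (\<exists>t'. step t a t' \<and> (s', t') \<in> R)) \<and>
        (\<forall>P. holds PI AP P s \<longrightarrow> holds PI AP P t)" using B3 R(2) by fast
  show "step s a s' \<Longrightarrow> \<exists>t'. step t a t' \<and> bisimilar PI AP s' t'"
  proof -
    assume "step s a s'"
    then obtain t' where "step t a t'" "(s', t') \<in> R" using D by blast
    then show ?thesis unfolding bisimilar_def using R(1) by blast
  qed
  show "holds PI AP P s \<Longrightarrow> holds PI AP P t" using D by blast
qed

lemma completeness_n: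
  "\<forall>s t. size s + size t < n \<longrightarrow> bisimilar PI AP s t \<longrightarrow> derivable PI AP s t"
proof (induction n)
  case 0 then show ?case by simp
next
  case (Suc n)
  show ?case
  proof (intro allI impI)
    fix s t :: "('a, 'b) tm"
    assume sz: "size s + size t < Suc n" and b: "bisimilar PI AP s t"
    have b': "bisimilar PI AP t s" using bisim_props(3)[OF b] .
    have A: "derivable PI AP (Plus t s) t"
    proof (rule absorb)
      show "closed s" using bisim_props(1)[OF b] .
      show "\<forall>a s'. step s a s' \<longrightarrow> (\<exists>t'. step t a t' \<and> derivable PI AP s' t')"
      proof (intro allI impI)
        fix a s' assume st: "step s a s'"
        then obtain t' where "step t a t'" "bisimilar PI AP s' t'" using bisim_props(4)[OF b] by blast
        moreover have "size s' + size t' < n" using step_size[OF st] step_size[OF \<open>step t a t'\<close>] sz by simp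
        ultimately show "\<exists>t'. step t a t' \<and> derivable PI AP s' t'" using Suc.IH by blast
      qed
      show "\<forall>P. holds PI AP P s \<longrightarrow> holds PI AP P t" using bisim_props(5)[OF b] by blast
    qed
    have B: "derivable PI AP (Plus s t) s"
    proof (rule absorb)
      show "closed t" using bisim_props(1)[OF b'] .
      show "\<forall>a t'. step t a t' \<longrightarrow> (\<exists>s'. step s a s' \<and> derivable PI AP t' s')"
      proof (intro allI impI)
        fix a t' assume st: "step t a t'"
        then obtain s' where "step s a s'" "bisimilar PI AP t' s'" using bisim_props(4)[OF b'] by blast
        moreover have "size t' + size s' < n" using step_size[OF st] step_size[OF \<open>step s a s'\<close>] sz by simp
        ultimately show "\<exists>s'. step s a s' \<and> derivable PI AP t' s'" using Suc.IH by blast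
      qed
      show "\<forall>P. holds PI AP P t \<longrightarrow> holds PI AP P s" using bisim_props(5)[OF b'] by blast
    qed
    have "derivable PI AP s (Plus s t)" by (rule der_sym[OF B])
    also have "derivable PI AP \<dots> (Plus t s)" by (rule d_comm)
    also have "derivable PI AP \<dots> t" by (rule A)
    finally show "derivable PI AP s t" .
  qed
qed

theorem theorem1:
  fixes PI :: "('p::finite) set" and AP :: "'p \<Rightarrow> ('a::finite) set"
    and t t' :: "('a, 'p) tm"
  assumes "closed t" and "closed t'"
  shows "derivable PI AP t t' \<longleftrightarrow> bisimilar PI AP t t'"
proof
  assume "derivable PI AP t t'"
  then show "bisimilar PI AP t t'" using soundness[OF assms] by blast
next
  assume b: "bisimilar PI AP t t'"
  have "size t + size t' < size t + size t' + 1" by simp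
  then show "derivable PI AP t t'" using completeness_n[of "size t + size t' + 1" PI AP] b by blast
qed

end
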